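(* For any essentially distributed Petri net $N$ there is an LSGA net $N'$ with $N'\approx^\Delta_{bSTb}N$.
   Context: Fix visible actions $\mathrm{Act}$ and $\tau\notin\mathrm{Act}$. A Petri net $N=(S,T,F,M_0,\ell)$: $S,T$ disjoint, $F:(S\times T)\cup(T\times S)\to\mathbb N$, $M_0\in\mathbb N^S$, $\ell:T\to\mathrm{Act}\cup\{\tau\}$. ${}^\bullet x(y)=F(y,x)$, $x^\bullet(y)=F(x,y)$ (multisets, extended additively); for a finite nonempty multiset $G$ of transitions $M[G\rangle M'$ iff ${}^\bullet G\le M$ and $M'=M-{}^\bullet G+G^\bullet$; reachable markings as usual; $t\smile u$ iff $M[\{t\}+\{u\}\rangle$ for some reachable $M$. Essentially distributed: there is a function $D$ on $S\cup T$ such that (1) $s\in{}^\bullet t\Rightarrow D(t)=D(s)$, and (2') for all $t,u\in T$, if $t\smile u$ and $\ell(t)\ne\tau$ then $D(t)\ne D(u)$. Components and LSGA nets: a component with interface is $(N,I,O)$ with $I,O\subseteq S$, $I\cap O=\emptyset$ and $o^\bullet=\emptyset$ for all $o\in O$. It is sequential iff there is $Q\subseteq S\setminus(I\cup O)$ such that for every $t\in T$, $|{}^\bullet t\restriction Q|=1$ and $|t^\bullet\restriction Q|=1$, and $|M_0\restriction Q|=1$ (cardinality with multiplicity). Given components $((S_k,T_k,F_k,M_{0k},\ell_k),I_k,O_k)$, $k\in K$, with $(S_k\cup T_k)\cap(S_l\cup T_l)=(I_k\cup O_k)\cap(I_l\cup O_l)$ and $I_k\cap I_l=\emptyset$ for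 $k\ne l$, their asynchronous parallel composition is $((\bigcup S_k,\bigcup T_k,\bigcup F_k,\sum M_{0k},\bigcup\ell_k),\bigcup I_k,\bigcup O_k\setminus\bigcup I_k)$. A net $N$ is an LSGA net iff $(N,I,O)$ is the asynchronous parallel composition of some family of sequential components, for some $I,O$. $\approx^\Delta_{bSTb}$: LTS notation: $\Rightarrow$ reflexive transitive closure of $\xrightarrow{\tau}$; $\mathfrak M\xrightarrow{(\alpha)}\mathfrak M'$ iff $\mathfrak M\xrightarrow{\alpha}\mathfrak M'$ or ($\alpha=\tau$ and $\mathfrak M=\mathfrak M'$). A branching bisimulation with explicit divergence is a relation $\mathcal B$ between the states of two LTSs, relating initial states, such that if $\mathfrak M_1\mathcal B\mathfrak M_2$ and $\mathfrak M_1\xrightarrow{\alpha}\mathfrak M_1'$ then $\mathfrak M_2\Rightarrow\mathfrak M_2^\dagger\xrightarrow{(\alpha)}\mathfrak M_2'$ with $\mathfrak M_1\mathcal B\mathfrak M_2^\dagger$, $\mathfrak M_1'\mathcal B\mathfrak M_2'$, and symmetrically; and if $\mathfrak M_1\mathcal B\mathfrak M_2$ and there is an infinite $\tau$-sequence from $\mathfrak M_1$ all of whose states are related to $\mathfrak M_2$, then there is an infinite $\tau$-sequence from $\mathfrak M_2$ such that every state of the first is related to every state of the second, and symmetrically. ST-LTS of a net: states $(M,U)\in\mathbb N^S\times T^*$, initial $(M_0,\varepsilon)$; $(M,U)\xrightarrow{a^+}(M-{}^\bullet t,Ut)$ iff $\ell(t)=a\in\mathrm{Act}$ and $M[t\rangle$;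 $(M,U)\xrightarrow{a^{-n}}(M+t^\bullet,U^{-n})$ iff the $n$-th element $t$ of $U$ has label $a$ ($U^{-n}$ removes it); $(M,U)\xrightarrow{\tau}(M',U)$ iff $M[t\rangle M'$ with $\ell(t)=\tau$. $N_1\approx^\Delta_{bSTb}N_2$ iff their ST-LTSs are related by a branching bisimulation with explicit divergence. *)

theory Defs
  imports Main "HOL-Library.Multiset"
begin

text \<open>A labelled Petri net N = (S,T,F,M0,l). Places have type 's, transitions type 't
  (so S and T are disjoint by typing). Visible actions are the elements of type 'a;
  the invisible action tau is None, so l : T -> Act + {tau} is a map into 'a option.
  The flow F is split into pre s t = F(s,t) and post t s = F(t,s).\<close>

record ('s,'t,'a) pnet =
  places :: "'s set"
  trans  :: "'t set"
  pre    :: "'s \<Rightarrow> 't \<Rightarrow> nat"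
  post   :: "'t \<Rightarrow> 's \<Rightarrow> nat"
  init   :: "'s \<Rightarrow> nat"
  lab    :: "'t \<Rightarrow> 'a option"

definition wf_net :: "('s,'t,'a) pnet \<Rightarrow> bool" where
  "wf_net N \<longleftrightarrow>
     (\<forall>s t. pre N s t \<noteq> 0 \<longrightarrow> s \<in> places N \<and> t \<in> trans N) \<and>
     (\<forall>t s. post N t s \<noteq> 0 \<longrightarrow> s \<in> places N \<and> t \<in> trans N) \<and>
     (\<forall>s. init N s \<noteq> 0 \<longrightarrow> s \<in> places N)"

definition pre_ms :: "('s,'t,'a) pnet \<Rightarrow> 't multiset \<Rightarrow> 's \<Rightarrow> nat" where
  "pre_ms N G s = sum_mset (image_mset (pre N s) G)"

definition post_ms :: "('s,'t,'a) pnet \<Rightarrow> 't multiset \<Rightarrow> 's \<Rightarrow> nat" where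
  "post_ms N G s = sum_mset (image_mset (\<lambda>t. post N t s) G)"

definition fire_ms :: "('s,'t,'a) pnet \<Rightarrow> ('s \<Rightarrow> nat) \<Rightarrow> 't multiset \<Rightarrow> ('s \<Rightarrow> nat) \<Rightarrow> bool" where
  "fire_ms N M G M' \<longleftrightarrow> G \<noteq> {#} \<and> set_mset G \<subseteq> trans N \<and>
     (\<forall>s. pre_ms N G s \<le> M s) \<and> M' = (\<lambda>s. M s - pre_ms N G s + post_ms N G s)"

inductive reachable :: "('s,'t,'a) pnet \<Rightarrow> ('s \<Rightarrow> nat) \<Rightarrow> bool" for N where
  reach_init: "reachable N (init N)"
| reach_step: "reachable N M \<Longrightarrow> fire_ms N M {#t#} M' \<Longrightarrow> reachable N M'"

definition conc :: "('s,'t,'a) pnet \<Rightarrow> 't \<Rightarrow> 't \<Rightarrow> bool" where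
  "conc N t u \<longleftrightarrow> (\<exists>M M'. reachable N M \<and> fire_ms N M ({#t#} + {#u#}) M')"

text \<open>The distribution D is a function on S u T; its codomain
  (the set of locations) is represented by 's + 't itself, which is no restriction since
  only the induced partition of S u T matters (pick a representative of each class).\<close>
definition ess_distributed :: "('s,'t,'a) pnet \<Rightarrow> bool" where
  "ess_distributed N \<longleftrightarrow> (\<exists>D :: 's + 't \<Rightarrow> 's + 't.
     (\<forall>t\<in>trans N. \<forall>s\<in>places N. pre N s t > 0 \<longrightarrow> D (Inr t) = D (Inl s)) \<and>
     (\<forall>t\<in>trans N. \<forall>u\<in>trans N. conc N t u \<and> lab N t \<noteq> None \<longrightarrow> D (Inr t) \<noteq> D (Inr u)))"

type_synonym ('s,'t,'a) comp = "('s,'t,'a) pnet \<times> 's set \<times> 's set"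

definition is_component :: "('s,'t,'a) comp \<Rightarrow> bool" where
  "is_component c \<longleftrightarrow> (case c of (N, I, Out) \<Rightarrow>
     wf_net N \<and> I \<subseteq> places N \<and> Out \<subseteq> places N \<and> I \<inter> Out = {} \<and>
     (\<forall>p\<in>Out. \<forall>t. pre N p t = 0))"

definition one_on :: "'s set \<Rightarrow> ('s \<Rightarrow> nat) \<Rightarrow> bool" where
  "one_on Q f \<longleftrightarrow> (\<exists>q\<in>Q. f q = 1 \<and> (\<forall>q'\<in>Q. q' \<noteq> q \<longrightarrow> f q' = 0))"

definition sequential :: "('s,'t,'a) comp \<Rightarrow> bool" where
  "sequential c \<longleftrightarrow> is_component c \<and> (case c of (N, I, Out) \<Rightarrow>
     (\<exists>Q. Q \<subseteq> places N - (I \<union> Out) \<and>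
        (\<forall>t\<in>trans N. one_on Q (\<lambda>q. pre N q t) \<and> one_on Q (\<lambda>q. post N t q)) \<and>
        one_on Q (init N)))"

text \<open>The family is given as a set of components (distinct members play the role of k \<noteq> l).
  The sum of initial markings is required to be well defined (finitely many nonzero
  summands at every place).\<close>
definition async_comp ::
  "('s,'t,'a) comp set \<Rightarrow> ('s,'t,'a) pnet \<Rightarrow> 's set \<Rightarrow> 's set \<Rightarrow> bool" where
  "async_comp C N I Out \<longleftrightarrow>
     (\<forall>c\<in>C. is_component c) \<and>
     (\<forall>c\<in>C. \<forall>d\<in>C. c \<noteq> d \<longrightarrow>
        places (fst c) \<inter> places (fst d) =
          (fst (snd c) \<union> snd (snd c)) \<inter> (fst (snd d) \<union> snd (snd d)) \<and>
        trans (fst c) \<inter> trans (fst d) = {} \<and>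
        fst (snd c) \<inter> fst (snd d) = {}) \<and>
     wf_net N \<and>
     places N = (\<Union>c\<in>C. places (fst c)) \<and>
     trans N = (\<Union>c\<in>C. trans (fst c)) \<and>
     (\<forall>c\<in>C. \<forall>t\<in>trans (fst c).
        (\<forall>s. pre N s t = pre (fst c) s t \<and> post N t s = post (fst c) t s) \<and>
        lab N t = lab (fst c) t) \<and>
     (\<forall>s. finite {c\<in>C. init (fst c) s \<noteq> 0} \<and>
          init N s = (\<Sum>c\<in>{c\<in>C. init (fst c) s \<noteq> 0}. init (fst c) s)) \<and>
     I = (\<Union>c\<in>C. fst (snd c)) \<and>
     Out = (\<Union>c\<in>C. snd (snd c)) - (\<Union>c\<in>C. fst (snd c))"

definition LSGA :: "('s,'t,'a) pnet \<Rightarrow> bool" where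
  "LSGA N \<longleftrightarrow> (\<exists>C I Out. (\<forall>c\<in>C. sequential c) \<and> async_comp C N I Out)"

datatype 'a st_act = StartA 'a | EndA 'a nat | TauA

text \<open>States (M,U); EndA a n refers to the n-th element of U (1-based).\<close>
definition st_step :: "('s,'t,'a) pnet \<Rightarrow> ('s \<Rightarrow> nat) \<times> 't list \<Rightarrow> 'a st_act
                        \<Rightarrow> ('s \<Rightarrow> nat) \<times> 't list \<Rightarrow> bool" where
  "st_step N x \<alpha> y \<longleftrightarrow> (case \<alpha> of
      StartA a \<Rightarrow> (\<exists>t\<in>trans N. lab N t = Some a \<and> (\<forall>s. pre N s t \<le> fst x s) \<and>
                     fst y = (\<lambda>s. fst x s - pre N s t) \<and> snd y = snd x @ [t])
    | EndA a n \<Rightarrow> 1 \<le> n \<and> n \<le> length (snd x) \<and> lab N (snd x ! (n - 1)) = Some a \<and>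
                     fst y = (\<lambda>s. fst x s + post N (snd x ! (n - 1)) s) \<and>
                     snd y = take (n - 1) (snd x) @ drop n (snd x)
    | TauA \<Rightarrow> (\<exists>t\<in>trans N. lab N t = None \<and> fire_ms N (fst x) {#t#} (fst y) \<and> snd y = snd x))"

definition bb_transfer ::
  "('x \<Rightarrow> 'l \<Rightarrow> 'x \<Rightarrow> bool) \<Rightarrow> ('y \<Rightarrow> 'l \<Rightarrow> 'y \<Rightarrow> bool) \<Rightarrow> 'l \<Rightarrow> ('x \<Rightarrow> 'y \<Rightarrow> bool) \<Rightarrow> bool" where
  "bb_transfer step1 step2 tau B \<longleftrightarrow>
     (\<forall>x y \<alpha> x'. B x y \<and> step1 x \<alpha> x' \<longrightarrow>
        (\<exists>y1 y2. (\<lambda>a b. step2 a tau b)\<^sup>*\<^sup>* y y1 \<and>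
                 (step2 y1 \<alpha> y2 \<or> (\<alpha> = tau \<and> y1 = y2)) \<and> B x y1 \<and> B x' y2))"

definition div_transfer ::
  "('x \<Rightarrow> 'l \<Rightarrow> 'x \<Rightarrow> bool) \<Rightarrow> ('y \<Rightarrow> 'l \<Rightarrow> 'y \<Rightarrow> bool) \<Rightarrow> 'l \<Rightarrow> ('x \<Rightarrow> 'y \<Rightarrow> bool) \<Rightarrow> bool" where
  "div_transfer step1 step2 tau B \<longleftrightarrow>
     (\<forall>x y f. B x y \<and> f 0 = x \<and> (\<forall>i. step1 (f i) tau (f (Suc i))) \<and> (\<forall>i. B (f i) y) \<longrightarrow>
        (\<exists>g. g 0 = y \<and> (\<forall>i. step2 (g i) tau (g (Suc i))) \<and> (\<forall>i j. B (f i) (g j))))"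

definition bb_div ::
  "('x \<Rightarrow> 'l \<Rightarrow> 'x \<Rightarrow> bool) \<Rightarrow> 'x \<Rightarrow> ('y \<Rightarrow> 'l \<Rightarrow> 'y \<Rightarrow> bool) \<Rightarrow> 'y \<Rightarrow> 'l
     \<Rightarrow> ('x \<Rightarrow> 'y \<Rightarrow> bool) \<Rightarrow> bool" where
  "bb_div step1 i1 step2 i2 tau B \<longleftrightarrow> B i1 i2 \<and>
     bb_transfer step1 step2 tau B \<and> bb_transfer step2 step1 tau (conversep B) \<and>
     div_transfer step1 step2 tau B \<and> div_transfer step2 step1 tau (conversep B)"

definition bSTb_div :: "('s1,'t1,'a) pnet \<Rightarrow> ('s2,'t2,'a) pnet \<Rightarrow> bool" where
  "bSTb_div N1 N2 \<longleftrightarrow>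
     (\<exists>B. bb_div (st_step N1) (init N1, []) (st_step N2) (init N2, []) TauA B)"

end

theory Submission
  imports Defs
begin

fun dp :: "('s + 't + nat) list \<Rightarrow> 's option" where
  "dp [Inl s] = Some s" | "dp _ = None"

fun dt :: "('s + 't + nat) list \<Rightarrow> 't option" where
  "dt [Inr (Inl t)] = Some t" | "dt _ = None"

lemma dp_Some[simp]: "dp p = Some s \<longleftrightarrow> p = [Inl s]"
  by (cases p rule: dp.cases) auto

lemma dt_Some[simp]: "dt p = Some t \<longleftrightarrow> p = [Inr (Inl t)]"
  by (cases p rule: dt.cases) auto

definition qp :: "'s + 't \<Rightarrow> ('s + 't + nat) list" where
  "qp L = [Inr (Inr 0), map_sum id Inl L]"

lemma qp_inj[simp]: "qp L = qp L' \<longleftrightarrow> L = L'"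
  by (cases L; cases L'; auto simp: qp_def)

lemma qp_ne[simp]: "qp L \<noteq> [Inl s]" "[Inl s] \<noteq> qp L" "qp L \<noteq> [Inr (Inl t)]" "[Inr (Inl t)] \<noteq> qp L"
  "dp (qp L) = None" "dt (qp L) = None"
  by (auto simp: qp_def)

lemma place_cases:
  obtains s where "p = [Inl s]" | L where "p = qp L" | "dp p = None" "p \<notin> range qp"
  by (cases "dp p") (auto elim: dp.elims)

locale dn =
  fixes N :: "('s,'t,'a) pnet" and D :: "'s + 't \<Rightarrow> 's + 't"
  assumes wf: "wf_net N"
  and D1: "\<forall>t\<in>trans N. \<forall>s\<in>places N. pre N s t > 0 \<longrightarrow> D (Inr t) = D (Inl s)"
  and D2: "\<forall>t\<in>trans N. \<forall>u\<in>trans N. conc N t u \<and> lab N t \<noteq> None \<longrightarrow> D (Inr t) \<noteq> D (Inr u)"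
begin

definition pre' :: "('s+'t+nat) list \<Rightarrow> ('s+'t+nat) list \<Rightarrow> nat" where
  "pre' p x = (case dt x of None \<Rightarrow> 0 | Some t \<Rightarrow> if t \<in> trans N then
      (case dp p of Some s \<Rightarrow> pre N s t | None \<Rightarrow> if p = qp (D (Inr t)) then 1 else 0) else 0)"

definition post' :: "('s+'t+nat) list \<Rightarrow> ('s+'t+nat) list \<Rightarrow> nat" where
  "post' x p = (case dt x of None \<Rightarrow> 0 | Some t \<Rightarrow> if t \<in> trans N then
      (case dp p of Some s \<Rightarrow> post N t s | None \<Rightarrow> if p = qp (D (Inr t)) then 1 else 0) else 0)"

definition init' :: "('s+'t+nat) list \<Rightarrow> nat" where
  "init' p = (case dp p of Some s \<Rightarrow> init N s | None \<Rightarrow> if p \<in> range qp then 1 else 0)"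

definition lab' :: "('s+'t+nat) list \<Rightarrow> 'a option" where
  "lab' x = (case dt x of Some t \<Rightarrow> lab N t | None \<Rightarrow> None)"

abbreviation et :: "'t \<Rightarrow> ('s+'t+nat) list" where "et t \<equiv> [Inr (Inl t)]"
abbreviation es :: "'s \<Rightarrow> ('s+'t+nat) list" where "es s \<equiv> [Inl s]"

definition NN :: "(('s+'t+nat) list, ('s+'t+nat) list, 'a) pnet" where
  "NN = \<lparr>places = es ` places N \<union> range qp, trans = et ` trans N,
         pre = pre', post = post', init = init', lab = lab'\<rparr>"

lemma NN_simps[simp]: "places NN = es ` places N \<union> range qp" "trans NN = et ` trans N"
  "pre NN = pre'" "post NN = post'" "init NN = init'" "lab NN = lab'"
  by (simp_all add: NN_def)

lemma wfN: "pre N s t \<noteq> 0 \<Longrightarrow> s \<in> places N \<and> t \<in> trans N"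
  "post N t s \<noteq> 0 \<Longrightarrow> s \<in> places N \<and> t \<in> trans N"
  "init N s \<noteq> 0 \<Longrightarrow> s \<in> places N"
  using wf by (auto simp: wf_net_def)

lemma wfN': "0 < pre N s t \<Longrightarrow> s \<in> places N" "0 < post N t s \<Longrightarrow> s \<in> places N"
  "0 < init N s \<Longrightarrow> s \<in> places N"
  using wfN by auto

lemma pre'_simps[simp]:
  "pre' (es s) (et t) = pre N s t"
  "pre' (qp L) (et t) = (if t \<in> trans N \<and> L = D (Inr t) then 1 else 0)"
  "dp p = None \<Longrightarrow> p \<notin> range qp \<Longrightarrow> pre' p x = 0"
  "dt x = None \<Longrightarrow> pre' p x = 0"
  using wfN(1)[of s t] by (auto simp: pre'_def split: option.splits)

lemma post'_simps[simp]:
  "post' (et t) (es s) = post N t s"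
  "post' (et t) (qp L) = (if t \<in> trans N \<and> L = D (Inr t) then 1 else 0)"
  "dp p = None \<Longrightarrow> p \<notin> range qp \<Longrightarrow> post' x p = 0"
  "dt x = None \<Longrightarrow> post' x p = 0"
  using wfN(2)[of t s] by (auto simp: post'_def split: option.splits)

lemma init'_simps[simp]: "init' (es s) = init N s" "init' (qp L) = 1"
  "dp p = None \<Longrightarrow> p \<notin> range qp \<Longrightarrow> init' p = 0"
  by (auto simp: init'_def)

lemma lab'_simps[simp]: "lab' (et t) = lab N t"
  by (simp add: lab'_def)

lemma wf_NN: "wf_net NN"
proof -
  have 1: "s \<in> places NN \<and> t \<in> trans NN" if "pre NN s t \<noteq> 0" for s t
    using that by (cases "dt t") (auto simp: pre'_def split: option.splits if_splits elim: dp.elims dt.elims dest: wfN wfN')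
  have 2: "s \<in> places NN \<and> t \<in> trans NN" if "post NN t s \<noteq> 0" for s t
    using that by (cases "dt t") (auto simp: post'_def split: option.splits if_splits elim: dp.elims dt.elims dest: wfN wfN')
  have 3: "s \<in> places NN" if "init NN s \<noteq> 0" for s
    using that by (auto simp: init'_def split: option.splits if_splits elim: dp.elims dest: wfN wfN')
  show ?thesis unfolding wf_net_def using 1 2 3 by blast
qed


lemma fire1: "fire_ms X M {#t#} M' \<longleftrightarrow> t \<in> trans X \<and> (\<forall>s. pre X s t \<le> M s) \<and>
   M' = (\<lambda>s. M s - pre X s t + post X t s)"
  by (simp add: fire_ms_def pre_ms_def post_ms_def)

definition RR :: "'t list \<Rightarrow> 's \<Rightarrow> nat" where
  "RR U s = sum_list (map (\<lambda>u. pre N s u) U)"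

definition Inv :: "('s \<Rightarrow> nat) \<times> 't list \<Rightarrow> bool" where
  "Inv y \<longleftrightarrow> reachable N (\<lambda>s. fst y s + RR (snd y) s) \<and>
     (\<forall>u\<in>set (snd y). u \<in> trans N \<and> lab N u \<noteq> None) \<and> distinct (map (\<lambda>u. D (Inr u)) (snd y))"

definition Phi :: "('s \<Rightarrow> nat) \<times> 't list \<Rightarrow> (('s+'t+nat) list \<Rightarrow> nat) \<times> ('s+'t+nat) list list" where
  "Phi y = ((\<lambda>p. case dp p of Some s \<Rightarrow> fst y s | None \<Rightarrow>
      if p \<in> range qp then (if \<exists>u\<in>set (snd y). p = qp (D (Inr u)) then 0 else 1) else 0),
     map et (snd y))"

lemma Phi_simps[simp]: "fst (Phi y) (es s) = fst y s"
  "fst (Phi y) (qp L) = (if \<exists>u\<in>set (snd y). L = D (Inr u) then 0 else 1)"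
  "dp p = None \<Longrightarrow> p \<notin> range qp \<Longrightarrow> fst (Phi y) p = 0"
  "snd (Phi y) = map et (snd y)"
  by (auto simp: Phi_def)

lemma Phi_inj: "Phi y = Phi y' \<Longrightarrow> y = y'"
proof -
  assume a: "Phi y = Phi y'"
  have "fst y s = fst y' s" for s using arg_cong[OF a, of "\<lambda>z. fst z (es s)"] by simp
  moreover have "snd y = snd y'" using arg_cong[OF a, of snd] by (simp add: inj_map_eq_map inj_def)
  ultimately show ?thesis by (simp add: prod_eq_iff fun_eq_iff)
qed

lemma block:
  assumes "Inv (M,U)" "u \<in> set U" "t \<in> trans N" "\<forall>s. pre N s t \<le> M s"
  shows "D (Inr u) \<noteq> D (Inr t)"
proof -
  have r: "reachable N (\<lambda>s. M s + RR U s)" and u: "u \<in> trans N" "lab N u \<noteq> None"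
    using assms(1,2) by (auto simp: Inv_def)
  have "pre N s u \<le> RR U s" for s
    unfolding RR_def by (rule member_le_sum_list) (use assms(2) in auto)
  then have "\<forall>s. pre_ms N ({#u#} + {#t#}) s \<le> M s + RR U s"
    using assms(4) by (simp add: pre_ms_def add_mono add.commute)
  then have "conc N u t" unfolding conc_def fire_ms_def
    by (intro exI[of _ "\<lambda>s. M s + RR U s"] exI) (use r u assms(3) in auto)
  then show ?thesis using D2 u assms(3) by blast
qed

lemma L_start:
  assumes "Inv (M,U)" "t \<in> trans N" "\<forall>s. pre N s t \<le> M s"
  shows "\<forall>p. pre' p (et t) \<le> fst (Phi (M,U)) p"
    "(\<lambda>p. fst (Phi (M,U)) p - pre' p (et t)) = fst (Phi (\<lambda>s. M s - pre N s t, U @ [t]))"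
proof -
  have blk: "\<forall>u\<in>set U. D (Inr t) \<noteq> D (Inr u)" using block[OF assms(1) _ assms(2,3)] by metis
  show "\<forall>p. pre' p (et t) \<le> fst (Phi (M,U)) p"
  proof
    fix p show "pre' p (et t) \<le> fst (Phi (M,U)) p"
      by (cases p rule: place_cases) (use assms blk in auto)
  qed
  show "(\<lambda>p. fst (Phi (M,U)) p - pre' p (et t)) = fst (Phi (\<lambda>s. M s - pre N s t, U @ [t]))"
  proof
    fix p show "fst (Phi (M,U)) p - pre' p (et t) = fst (Phi (\<lambda>s. M s - pre N s t, U @ [t])) p"
      by (cases p rule: place_cases) (use assms blk in auto)
  qed
qed

lemma L_tau:
  assumes "Inv (M,U)" "t \<in> trans N" "\<forall>s. pre N s t \<le> M s"
  shows "(\<lambda>p. fst (Phi (M,U)) p - pre' p (et t) + post' (et t) p)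
       = fst (Phi (\<lambda>s. M s - pre N s t + post N t s, U))"
proof
  have blk: "\<forall>u\<in>set U. D (Inr t) \<noteq> D (Inr u)" using block[OF assms(1) _ assms(2,3)] by metis
  fix p show "fst (Phi (M,U)) p - pre' p (et t) + post' (et t) p = fst (Phi (\<lambda>s. M s - pre N s t + post N t s, U)) p"
    by (cases p rule: place_cases) (use assms blk in auto)
qed

lemma split_U:
  assumes "distinct (map f U)" "1 \<le> n" "n \<le> length U"
  shows "set U = insert (U ! (n-1)) (set (take (n-1) U @ drop n U))"
    "f (U ! (n-1)) \<notin> f ` set (take (n-1) U @ drop n U)"
    "distinct (map f (take (n-1) U @ drop n U))"
proof -
  have e: "U = take (n-1) U @ U ! (n-1) # drop n U"
    using id_take_nth_drop[of "n-1" U] assms by simp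
  show "set U = insert (U ! (n-1)) (set (take (n-1) U @ drop n U))"
    by (subst (1) e) auto
  show "f (U ! (n-1)) \<notin> f ` set (take (n-1) U @ drop n U)"
    using assms(1) by (subst (asm) e) auto
  show "distinct (map f (take (n-1) U @ drop n U))"
    using assms(1) by (subst (asm) e) auto
qed

lemma L_end:
  assumes "Inv (M,U)" "1 \<le> n" "n \<le> length U"
  shows "(\<lambda>p. fst (Phi (M,U)) p + post' (et (U ! (n-1))) p)
       = fst (Phi (\<lambda>s. M s + post N (U ! (n-1)) s, take (n-1) U @ drop n U))"
proof
  fix p
  have d: "distinct (map (\<lambda>u. D (Inr u)) U)" and tr: "\<forall>u\<in>set U. u \<in> trans N"
    using assms(1) by (auto simp: Inv_def)
  note sp = split_U[OF d assms(2,3)]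
  have uin: "U ! (n-1) \<in> set U" using assms by auto
  show "fst (Phi (M,U)) p + post' (et (U ! (n-1))) p
       = fst (Phi (\<lambda>s. M s + post N (U ! (n-1)) s, take (n-1) U @ drop n U)) p"
  proof (cases p rule: place_cases)
    case (2 L)
    then show ?thesis using sp(2) tr uin by (simp add: sp(1)) blast
  qed auto
qed


lemma RR_append[simp]: "RR (xs @ ys) s = RR xs s + RR ys s" and RR_Cons[simp]: "RR (x # xs) s = pre N s x + RR xs s"
  and RR_Nil[simp]: "RR [] s = 0"
  by (simp_all add: RR_def)

lemma Inv_init: "Inv (init N, [])"
  by (simp add: Inv_def reach_init)

lemma Inv_step:
  assumes "Inv (M,U)" "st_step N (M,U) \<alpha> (M2,U2)"
  shows "Inv (M2,U2)"
proof (cases \<alpha>)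
  case (StartA a)
  then obtain t where t: "t \<in> trans N" "lab N t = Some a" "\<forall>s. pre N s t \<le> M s"
    and e: "M2 = (\<lambda>s. M s - pre N s t)" "U2 = U @ [t]"
    using assms(2) by (auto simp: st_step_def)
  have blk: "\<forall>u\<in>set U. D (Inr u) \<noteq> D (Inr t)" using block[OF assms(1) _ t(1,3)] by metis
  have "(\<lambda>s. M2 s + RR U2 s) = (\<lambda>s. M s + RR U s)"
    using t(3) by (auto simp: e fun_eq_iff)
  then show ?thesis using assms(1) blk t by (auto simp: Inv_def e)
next
  case (EndA a n)
  then have n: "1 \<le> n" "n \<le> length U" and e: "M2 = (\<lambda>s. M s + post N (U ! (n-1)) s)"
     "U2 = take (n-1) U @ drop n U"
    using assms(2) by (auto simp: st_step_def)
  define u where "u = U ! (n-1)"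
  have d: "distinct (map (\<lambda>u. D (Inr u)) U)" and tr: "\<forall>u\<in>set U. u \<in> trans N \<and> lab N u \<noteq> None"
    and r: "reachable N (\<lambda>s. M s + RR U s)"
    using assms(1) by (auto simp: Inv_def)
  note sp = split_U[OF d n]
  have eU: "U = take (n-1) U @ u # drop n U"
    using id_take_nth_drop[of "n-1" U] n by (simp add: u_def)
  have RRe: "RR U s = RR U2 s + pre N s u" for s
    by (subst eU) (simp add: e)
  have uin: "u \<in> set U" using n by (auto simp: u_def)
  have f: "fire_ms N (\<lambda>s. M s + RR U s) {#u#} (\<lambda>s. M2 s + RR U2 s)"
    unfolding fire1 using tr uin by (auto simp: RRe e u_def fun_eq_iff)
  have "reachable N (\<lambda>s. M2 s + RR U2 s)" by (rule reach_step[OF r f])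
  moreover have "\<forall>u\<in>set U2. u \<in> trans N \<and> lab N u \<noteq> None"
    using tr sp(1) e(2) by blast
  ultimately show ?thesis using sp(3) by (simp add: Inv_def e(2))
next
  case TauA
  then obtain t where t: "t \<in> trans N" "fire_ms N M {#t#} M2" and e: "U2 = U"
    using assms(2) by (auto simp: st_step_def)
  have r: "reachable N (\<lambda>s. M s + RR U s)" using assms(1) by (simp add: Inv_def)
  from t(2) have p: "\<And>s. pre N s t \<le> M s" and m2: "M2 = (\<lambda>s. M s - pre N s t + post N t s)"
    by (auto simp: fire1)
  have p2: "pre N s t \<le> M s + RR U s" for s using p[of s] by simp
  have ar: "M s - pre N s t + post N t s + RR U s = M s + RR U s - pre N s t + post N t s" for s
    using p[of s] by simp
  have f: "fire_ms N (\<lambda>s. M s + RR U s) {#t#} (\<lambda>s. M2 s + RR U2 s)"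
    unfolding fire1 using t(1) p2 ar by (simp add: e m2)
  show ?thesis using reach_step[OF r f] assms(1) by (simp add: Inv_def e)
qed

lemma fwd:
  assumes "Inv y" "st_step N y \<alpha> y2"
  shows "st_step NN (Phi y) \<alpha> (Phi y2)"
proof -
  obtain M U where y: "y = (M,U)" by fastforce
  obtain M2 U2 where y2: "y2 = (M2,U2)" by fastforce
  have I: "Inv (M,U)" using assms y by simp
  show ?thesis
  proof (cases \<alpha>)
    case (StartA a)
    then obtain t where t: "t \<in> trans N" "lab N t = Some a" "\<forall>s. pre N s t \<le> M s"
      and e: "M2 = (\<lambda>s. M s - pre N s t)" "U2 = U @ [t]"
      using assms(2) by (auto simp: st_step_def y y2)
    note L = L_start[OF I t(1,3)]
    show ?thesis unfolding StartA st_step_def y y2 e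
      using L t by (auto intro!: bexI[of _ "et t"] simp: Phi_def[of "(_,U@[t])"])
  next
    case (EndA a n)
    then have n: "1 \<le> n" "n \<le> length U" "lab N (U ! (n-1)) = Some a"
      and e: "M2 = (\<lambda>s. M s + post N (U ! (n-1)) s)" "U2 = take (n-1) U @ drop n U"
      using assms(2) by (auto simp: st_step_def y y2)
    note L = L_end[OF I n(1,2)]
    show ?thesis unfolding EndA st_step_def y y2 e
      using L n by (auto simp: take_map drop_map)
  next
    case TauA
    then obtain t where t: "t \<in> trans N" "lab N t = None" "fire_ms N M {#t#} M2" and e: "U2 = U"
      using assms(2) by (auto simp: st_step_def y y2)
    have t3: "\<forall>s. pre N s t \<le> M s" and eM: "M2 = (\<lambda>s. M s - pre N s t + post N t s)"
      using t(3) by (auto simp: fire1)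
    note L = L_start(1)[OF I t(1) t3] L_tau[OF I t(1) t3]
    show ?thesis unfolding TauA st_step_def y y2 e eM fire1
      using L t by (auto intro!: bexI[of _ "et t"])
  qed
qed


lemma bwd:
  assumes "Inv y" "st_step NN (Phi y) \<alpha> x2"
  shows "\<exists>y2. st_step N y \<alpha> y2 \<and> x2 = Phi y2"
proof -
  obtain M U where y: "y = (M,U)" by fastforce
  have I: "Inv (M,U)" using assms y by simp
  show ?thesis
  proof (cases \<alpha>)
    case (StartA a)
    then obtain t where t: "t \<in> trans N" "lab N t = Some a" "\<forall>p. pre' p (et t) \<le> fst (Phi (M,U)) p"
      and e: "fst x2 = (\<lambda>p. fst (Phi (M,U)) p - pre' p (et t))" "snd x2 = map et U @ [et t]"
      using assms(2) by (auto simp: st_step_def y)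
    have t3: "\<forall>s. pre N s t \<le> M s"
    proof
      fix s show "pre N s t \<le> M s" using spec[OF t(3), of "es s"] by simp
    qed
    note L = L_start[OF I t(1) t3]
    show ?thesis
      by (rule exI[of _ "(\<lambda>s. M s - pre N s t, U @ [t])"])
         (use StartA t t3 L e in \<open>auto simp: st_step_def y prod_eq_iff\<close>)
  next
    case (EndA a n)
    then have n: "1 \<le> n" "n \<le> length U" "lab N (U ! (n-1)) = Some a"
      and e: "fst x2 = (\<lambda>p. fst (Phi (M,U)) p + post' (et (U ! (n-1))) p)"
         "snd x2 = take (n-1) (map et U) @ drop n (map et U)"
      using assms(2) by (auto simp: st_step_def y)
    note L = L_end[OF I n(1,2)]
    show ?thesis
      by (rule exI[of _ "(\<lambda>s. M s + post N (U ! (n-1)) s, take (n-1) U @ drop n U)"])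
         (use EndA n L e in \<open>auto simp: st_step_def y prod_eq_iff take_map drop_map\<close>)
  next
    case TauA
    then obtain t where t: "t \<in> trans N" "lab N t = None" "\<forall>p. pre' p (et t) \<le> fst (Phi (M,U)) p"
      and e: "fst x2 = (\<lambda>p. fst (Phi (M,U)) p - pre' p (et t) + post' (et t) p)" "snd x2 = map et U"
      using assms(2) by (auto simp: st_step_def y fire1)
    have t3: "\<forall>s. pre N s t \<le> M s"
    proof
      fix s show "pre N s t \<le> M s" using spec[OF t(3), of "es s"] by simp
    qed
    note L = L_tau[OF I t(1) t3]
    show ?thesis
      by (rule exI[of _ "(\<lambda>s. M s - pre N s t + post N t s, U)"])
         (use TauA t t3 L e in \<open>auto simp: st_step_def y prod_eq_iff fire1\<close>)
  qed
qed

definition BB where "BB x y \<longleftrightarrow> x = Phi y \<and> Inv y"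

lemma Inv_step': "Inv y \<Longrightarrow> st_step N y \<alpha> y2 \<Longrightarrow> Inv y2"
  using Inv_step[of "fst y" "snd y" \<alpha> "fst y2" "snd y2"] by simp

lemma bisim: "bSTb_div NN N"
  unfolding bSTb_div_def
proof (rule exI[of _ BB], unfold bb_div_def, intro conjI)
  show "BB (init NN, []) (init N, [])"
  proof -
    have "init NN = fst (Phi (init N, []))"
    proof
      fix p show "init NN p = fst (Phi (init N, [])) p" by (cases p rule: place_cases) auto
    qed
    then show ?thesis using Inv_init by (simp add: BB_def prod_eq_iff)
  qed
  show "bb_transfer (st_step NN) (st_step N) TauA BB"
    unfolding bb_transfer_def
  proof (intro allI impI)
    fix x y \<alpha> x' assume a: "BB x y \<and> st_step NN x \<alpha> x'"
    then obtain y2 where y2: "st_step N y \<alpha> y2" "x' = Phi y2"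
      using bwd unfolding BB_def by blast
    have "Inv y" using a by (simp add: BB_def)
    then have "BB x' y2" using Inv_step' y2 by (simp add: BB_def)
    then show "\<exists>y1 y2. (\<lambda>a b. st_step N a TauA b)\<^sup>*\<^sup>* y y1 \<and>
           (st_step N y1 \<alpha> y2 \<or> \<alpha> = TauA \<and> y1 = y2) \<and> BB x y1 \<and> BB x' y2"
      using a y2 by (intro exI[of _ y] exI[of _ y2]) auto
  qed
  show "bb_transfer (st_step N) (st_step NN) TauA (conversep BB)"
    unfolding bb_transfer_def
  proof (intro allI impI)
    fix x y \<alpha> x' assume a: "conversep BB x y \<and> st_step N x \<alpha> x'"
    then have ix: "Inv x" "y = Phi x" and sx: "st_step N x \<alpha> x'" by (auto simp: BB_def)
    have "st_step NN y \<alpha> (Phi x')" using fwd[OF ix(1) sx] ix(2) by simp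
    moreover have "BB (Phi x') x'" using Inv_step'[OF ix(1) sx] by (simp add: BB_def)
    ultimately show "\<exists>y1 y2. (\<lambda>a b. st_step NN a TauA b)\<^sup>*\<^sup>* y y1 \<and>
           (st_step NN y1 \<alpha> y2 \<or> \<alpha> = TauA \<and> y1 = y2) \<and> conversep BB x y1 \<and> conversep BB x' y2"
      using a by (intro exI[of _ y] exI[of _ "Phi x'"]) auto
  qed
  show "div_transfer (st_step NN) (st_step N) TauA BB"
    unfolding div_transfer_def
  proof (intro allI impI)
    fix x y f assume a: "BB x y \<and> f 0 = x \<and> (\<forall>i. st_step NN (f i) TauA (f (Suc i))) \<and> (\<forall>i. BB (f i) y)"
    then have fi: "f i = Phi y" for i by (simp add: BB_def)
    have I: "Inv y" using a by (simp add: BB_def)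
    have "st_step NN (Phi y) TauA (Phi y)" using a fi[of 0] fi[of "Suc 0"] by metis
    then obtain y2 where "st_step N y TauA y2" "Phi y = Phi y2" using bwd[OF I] by blast
    then have st: "st_step N y TauA y" using Phi_inj by metis
    show "\<exists>g. g 0 = y \<and> (\<forall>i. st_step N (g i) TauA (g (Suc i))) \<and> (\<forall>i j. BB (f i) (g j))"
      by (rule exI[of _ "\<lambda>_. y"]) (use st a fi in auto)
  qed
  show "div_transfer (st_step N) (st_step NN) TauA (conversep BB)"
    unfolding div_transfer_def
  proof (intro allI impI)
    fix x y f assume a: "conversep BB x y \<and> f 0 = x \<and> (\<forall>i. st_step N (f i) TauA (f (Suc i))) \<and> (\<forall>i. conversep BB (f i) y)"
    then have fi: "Phi (f i) = y" for i by (simp add: BB_def)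
    then have fe: "f i = x" for i using a Phi_inj by metis
    have I: "Inv x" using a by (simp add: BB_def)
    have "st_step N x TauA x" using a fe[of 0] fe[of "Suc 0"] by metis
    then have st: "st_step NN y TauA y" using fwd[OF I] a by (auto simp: BB_def)
    show "\<exists>g. g 0 = y \<and> (\<forall>i. st_step NN (g i) TauA (g (Suc i))) \<and> (\<forall>i j. conversep BB (f i) (g j))"
      by (rule exI[of _ "\<lambda>_. y"]) (use st a fe in auto)
  qed
qed


definition IL :: "'s + 't \<Rightarrow> ('s+'t+nat) list set" where
  "IL L = es ` {s\<in>places N. D (Inl s) = L}"
definition OL :: "'s + 't \<Rightarrow> ('s+'t+nat) list set" where
  "OL L = es ` {s\<in>places N. D (Inl s) \<noteq> L \<and> (\<exists>t\<in>trans N. D (Inr t) = L \<and> post N t s \<noteq> 0)}"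
definition TL :: "'s + 't \<Rightarrow> ('s+'t+nat) list set" where
  "TL L = et ` {t\<in>trans N. D (Inr t) = L}"

definition NL :: "'s + 't \<Rightarrow> (('s+'t+nat) list, ('s+'t+nat) list, 'a) pnet" where
  "NL L = \<lparr>places = insert (qp L) (IL L \<union> OL L), trans = TL L,
     pre = (\<lambda>p x. if x \<in> TL L then pre' p x else 0),
     post = (\<lambda>x p. if x \<in> TL L then post' x p else 0),
     init = (\<lambda>p. if p = qp L then 1 else if p \<in> IL L then init' p else 0),
     lab = lab'\<rparr>"

lemma NL_simps[simp]: "places (NL L) = insert (qp L) (IL L \<union> OL L)" "trans (NL L) = TL L"
  "pre (NL L) p x = (if x \<in> TL L then pre' p x else 0)"
  "post (NL L) x p = (if x \<in> TL L then post' x p else 0)"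
  "init (NL L) p = (if p = qp L then 1 else if p \<in> IL L then init' p else 0)"
  "lab (NL L) = lab'"
  by (simp_all add: NL_def)

lemma qp_notin[simp]: "qp L \<notin> IL L'" "qp L \<notin> OL L'" "qp L \<notin> TL L'"
  by (auto simp: IL_def OL_def TL_def)

lemma D1': "t \<in> trans N \<Longrightarrow> pre N s t \<noteq> 0 \<Longrightarrow> D (Inr t) = D (Inl s)"
  using D1 wfN by blast

definition cmp :: "'s + 't \<Rightarrow> (('s+'t+nat) list, ('s+'t+nat) list, 'a) comp" where
  "cmp L = (NL L, IL L, OL L)"

lemma comp_component: "is_component (cmp L)"
proof -
  have 1: "p \<in> places (NL L) \<and> x \<in> trans (NL L)" if "pre (NL L) p x \<noteq> 0" for p x
  proof -
    from that have x: "x \<in> TL L" and pr: "pre' p x \<noteq> 0" by (auto split: if_splits)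
    then obtain t where t: "x = et t" "t \<in> trans N" "D (Inr t) = L" by (auto simp: TL_def)
    show ?thesis
    proof (cases p rule: place_cases)
      case (1 s) then show ?thesis using pr t x D1'[of t s] wfN(1)[of s t] by (auto simp: IL_def)
    next
      case (2 L') then show ?thesis using pr t x by (auto split: if_splits)
    qed (use pr in auto)
  qed
  have 2: "p \<in> places (NL L) \<and> x \<in> trans (NL L)" if "post (NL L) x p \<noteq> 0" for p x
  proof -
    from that have x: "x \<in> TL L" and pr: "post' x p \<noteq> 0" by (auto split: if_splits)
    then obtain t where t: "x = et t" "t \<in> trans N" "D (Inr t) = L" by (auto simp: TL_def)
    show ?thesis
    proof (cases p rule: place_cases)
      case (1 s) then show ?thesis using pr t x wfN(2)[of t s] by (auto simp: IL_def OL_def)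
    next
      case (2 L') then show ?thesis using pr t x by (auto split: if_splits)
    qed (use pr in auto)
  qed
  have 3: "p \<in> places (NL L)" if "init (NL L) p \<noteq> 0" for p
    using that by (auto split: if_splits)
  have 4: "pre (NL L) p x = 0" if "p \<in> OL L" for p x
  proof (cases "x \<in> TL L")
    case True
    then obtain t where t: "x = et t" "t \<in> trans N" "D (Inr t) = L" by (auto simp: TL_def)
    from that obtain s where s: "p = es s" "D (Inl s) \<noteq> L" by (auto simp: OL_def)
    show ?thesis using D1'[of t s] t s by auto
  qed simp
  show ?thesis unfolding is_component_def cmp_def wf_net_def
    using 1 2 3 4 by (auto simp: IL_def OL_def)
qed

lemma comp_sequential: "sequential (cmp L)"
  unfolding sequential_def
proof (intro conjI)
  show "is_component (cmp L)" by (rule comp_component)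
  have oo: "one_on {qp L} f \<longleftrightarrow> f (qp L) = 1" for f by (simp add: one_on_def)
  show "case cmp L of (N, I, Out) \<Rightarrow> \<exists>Q. Q \<subseteq> places N - (I \<union> Out) \<and>
        (\<forall>t\<in>trans N. one_on Q (\<lambda>q. pre N q t) \<and> one_on Q (\<lambda>q. post N t q)) \<and> one_on Q (init N)"
    unfolding cmp_def prod.case
    by (rule exI[of _ "{qp L}"]) (auto simp: oo TL_def)
qed


lemma init_loc: "\<exists>L0. init' p = init (NL L0) p \<and> (\<forall>L. L \<noteq> L0 \<longrightarrow> init (NL L) p = 0)"
proof (cases p rule: place_cases)
  case (1 s)
  show ?thesis
    by (rule exI[of _ "D (Inl s)"]) (use 1 wfN(3)[of s] in \<open>auto simp: IL_def\<close>)
next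
  case (2 L)
  show ?thesis by (rule exI[of _ L]) (use 2 in auto)
next
  case 3
  then show ?thesis by (auto simp: IL_def)
qed

lemma init_sum: "finite {c\<in>range cmp. init (fst c) p \<noteq> 0} \<and>
   init NN p = (\<Sum>c\<in>{c\<in>range cmp. init (fst c) p \<noteq> 0}. init (fst c) p)"
proof -
  obtain L0 where L0: "init' p = init (NL L0) p" "\<And>L. L \<noteq> L0 \<Longrightarrow> init (NL L) p = 0"
    using init_loc by blast
  have sub: "{c\<in>range cmp. init (fst c) p \<noteq> 0} \<subseteq> {cmp L0}"
  proof
    fix c assume "c \<in> {c\<in>range cmp. init (fst c) p \<noteq> 0}"
    then obtain L where "c = cmp L" "init (NL L) p \<noteq> 0" by (auto simp: cmp_def simp del: NL_simps)
    then show "c \<in> {cmp L0}" using L0(2) by (cases "L = L0") auto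
  qed
  show ?thesis
  proof (cases "init (NL L0) p = 0")
    case True
    then have e: "{c\<in>range cmp. init (fst c) p \<noteq> 0} = {}" using sub by (auto simp: cmp_def simp del: NL_simps)
    show ?thesis unfolding e using True L0(1) by (simp del: NL_simps)
  next
    case False
    then have e: "{c\<in>range cmp. init (fst c) p \<noteq> 0} = {cmp L0}" using sub by (auto simp: cmp_def simp del: NL_simps)
    show ?thesis unfolding e using L0 by (simp add: cmp_def del: NL_simps)
  qed
qed

lemma LSGA_NN: "LSGA NN"
  unfolding LSGA_def
proof (intro exI conjI)
  show "\<forall>c\<in>range cmp. sequential c" using comp_sequential by blast
  show "async_comp (range cmp) NN (\<Union>c\<in>range cmp. fst (snd c))
          ((\<Union>c\<in>range cmp. snd (snd c)) - (\<Union>c\<in>range cmp. fst (snd c)))"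
    unfolding async_comp_def
  proof (intro conjI)
    show "\<forall>c\<in>range cmp. is_component c" using comp_component by blast
    show "\<forall>c\<in>range cmp. \<forall>d\<in>range cmp. c \<noteq> d \<longrightarrow>
        places (fst c) \<inter> places (fst d) = (fst (snd c) \<union> snd (snd c)) \<inter> (fst (snd d) \<union> snd (snd d)) \<and>
        trans (fst c) \<inter> trans (fst d) = {} \<and> fst (snd c) \<inter> fst (snd d) = {}"
    proof (intro ballI impI)
      fix c d assume "c \<in> range cmp" "d \<in> range cmp" "c \<noteq> d"
      then obtain L L' where e: "c = cmp L" "d = cmp L'" "L \<noteq> L'" by auto
      show "places (fst c) \<inter> places (fst d) = (fst (snd c) \<union> snd (snd c)) \<inter> (fst (snd d) \<union> snd (snd d)) \<and>
        trans (fst c) \<inter> trans (fst d) = {} \<and> fst (snd c) \<inter> fst (snd d) = {}"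
        using e by (auto simp: cmp_def TL_def IL_def)
    qed
    show "wf_net NN" by (rule wf_NN)
    show "places NN = (\<Union>c\<in>range cmp. places (fst c))"
    proof
      show "places NN \<subseteq> (\<Union>c\<in>range cmp. places (fst c))"
      proof
        fix p assume "p \<in> places NN"
        then consider s where "p = es s" "s \<in> places N" | L where "p = qp L" by auto
        then show "p \<in> (\<Union>c\<in>range cmp. places (fst c))"
        proof cases
          case (1 s) then show ?thesis
            by (intro UN_I[of "cmp (D (Inl s))"]) (auto simp: cmp_def IL_def)
        next
          case (2 L) then show ?thesis
            by (intro UN_I[of "cmp L"]) (auto simp: cmp_def)
        qed
      qed
      show "(\<Union>c\<in>range cmp. places (fst c)) \<subseteq> places NN"
        by (auto simp: cmp_def IL_def OL_def)
    qed
    show "trans NN = (\<Union>c\<in>range cmp. trans (fst c))"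
      by (auto simp: cmp_def TL_def)
    show "\<forall>c\<in>range cmp. \<forall>t\<in>trans (fst c).
        (\<forall>s. pre NN s t = pre (fst c) s t \<and> post NN t s = post (fst c) t s) \<and> lab NN t = lab (fst c) t"
      by (auto simp: cmp_def)
    show "\<forall>s. finite {c\<in>range cmp. init (fst c) s \<noteq> 0} \<and>
          init NN s = (\<Sum>c\<in>{c\<in>range cmp. init (fst c) s \<noteq> 0}. init (fst c) s)"
      using init_sum by blast
  qed simp_all
qed

end

theorem theorem4p15:
  fixes N :: "('s, 't, 'a) pnet"
  assumes "wf_net N" and "ess_distributed N"
  shows "\<exists>N' :: (('s + 't + nat) list, ('s + 't + nat) list, 'a) pnet.
           wf_net N' \<and> LSGA N' \<and> bSTb_div N' N"
proof -
  obtain D :: "'s + 't \<Rightarrow> 's + 't" where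
    D1: "\<forall>t\<in>trans N. \<forall>s\<in>places N. pre N s t > 0 \<longrightarrow> D (Inr t) = D (Inl s)" and
    D2: "\<forall>t\<in>trans N. \<forall>u\<in>trans N. conc N t u \<and> lab N t \<noteq> None \<longrightarrow> D (Inr t) \<noteq> D (Inr u)"
    using assms(2) unfolding ess_distributed_def by blast
  interpret dn N D using assms(1) D1 D2 by unfold_locales
  show ?thesis using wf_NN LSGA_NN bisim by blast
qed

end
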